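(* Let $G$ be a loopless simple edge-coloured graph with $n$ vertices and $n$ colours in which every colour class has exactly $3$ edges. Let $N$ be the set of non-star vertices of $G$, and suppose $|N|\ge 8$. Then there exist distinct $x,y\in N$ such that no colour class of $G$ dominates $\{x,y\}$.
   Context: Graphs may have parallel edges. An edge-coloured graph is simple if no colour class (set of edges of one colour) contains two parallel edges. A colour class is a star class if its three edges form a star $K_{1,3}$ (three edges sharing a common vertex, the centre, with three distinct other ends). A vertex is a star vertex if it is the centre of some star class, and a non-star vertex otherwise. A colour class $A$ dominates a pair $\{x,y\}$ of vertices if every edge in $A$ has at least one end in $\{x,y\}$. *)

theory Defs
  imports Main
begin

(* Parallel edges of different colours are allowed (the same pair may lie in several
   classes); representing a colour class as a SET of vertex pairs means it contains no
   two parallel edges, i.e. the colouring is simple.  card (C k) = 3 then says the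
   class has exactly three edges. *)

definition edge_of :: "'a set \<Rightarrow> 'a set \<Rightarrow> bool" where
  "edge_of V e \<longleftrightarrow> (\<exists>x y. x \<noteq> y \<and> x \<in> V \<and> y \<in> V \<and> e = {x, y})"

definition coloured_graph :: "'a set \<Rightarrow> 'c set \<Rightarrow> ('c \<Rightarrow> 'a set set) \<Rightarrow> bool" where
  "coloured_graph V K C \<longleftrightarrow> finite V \<and> finite K \<and>
     (\<forall>k\<in>K. \<forall>e\<in>C k. edge_of V e)"

definition star_class_centre :: "('c \<Rightarrow> 'a set set) \<Rightarrow> 'c \<Rightarrow> 'a \<Rightarrow> bool" where
  "star_class_centre C k v \<longleftrightarrow>
     (\<exists>a b c. a \<noteq> b \<and> a \<noteq> c \<and> b \<noteq> c \<and> a \<noteq> v \<and> b \<noteq> v \<and> c \<noteq> v \<and>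
              C k = {{v, a}, {v, b}, {v, c}})"

definition star_vertex :: "'c set \<Rightarrow> ('c \<Rightarrow> 'a set set) \<Rightarrow> 'a \<Rightarrow> bool" where
  "star_vertex K C v \<longleftrightarrow> (\<exists>k\<in>K. star_class_centre C k v)"

definition non_star_vertices :: "'a set \<Rightarrow> 'c set \<Rightarrow> ('c \<Rightarrow> 'a set set) \<Rightarrow> 'a set" where
  "non_star_vertices V K C = {v \<in> V. \<not> star_vertex K C v}"

definition dominates :: "('c \<Rightarrow> 'a set set) \<Rightarrow> 'c \<Rightarrow> 'a \<Rightarrow> 'a \<Rightarrow> bool" where
  "dominates C k x y \<longleftrightarrow> (\<forall>e\<in>C k. x \<in> e \<or> y \<in> e)"

end

theory Submission
  imports Defs
begin

definition cov :: "'a set set \<Rightarrow> 'a set set" where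
  "cov E = {A. \<exists>x y. x \<noteq> y \<and> A = {x,y} \<and> (\<forall>e\<in>E. x \<in> e \<or> y \<in> e)}"

lemma cov_disj:
  assumes c1: "card e1 = 2" and c2: "card e2 = 2" and c3: "card e3 = 2"
    and n1: "e3 \<noteq> e1" and n2: "e3 \<noteq> e2" and d: "e1 \<inter> e2 = {}"
  shows "finite (cov {e1,e2,e3}) \<and> card (cov {e1,e2,e3}) \<le> 3"
proof -
  let ?F = "{p \<in> e1 \<times> e2. fst p \<in> e3 \<or> snd p \<in> e3}"
  have f1: "finite e1" "finite e2" "finite e3" using c1 c2 c3 card.infinite by fastforce+
  have sub: "cov {e1,e2,e3} \<subseteq> (\<lambda>p. {fst p, snd p}) ` ?F"
  proof
    fix A assume "A \<in> cov {e1,e2,e3}"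
    then obtain x y where xy: "x \<noteq> y" "A = {x,y}" "x \<in> e1 \<or> y \<in> e1" "x \<in> e2 \<or> y \<in> e2"
      "x \<in> e3 \<or> y \<in> e3" unfolding cov_def by auto
    show "A \<in> (\<lambda>p. {fst p, snd p}) ` ?F"
    proof (cases "x \<in> e1")
      case True
      then have "y \<in> e2" using xy d by auto
      then show ?thesis using True xy by (intro image_eqI[of _ _ "(x,y)"]) auto
    next
      case False
      then have "y \<in> e1" "x \<in> e2" using xy d by auto
      then show ?thesis using xy by (intro image_eqI[of _ _ "(y,x)"]) auto
    qed
  qed
  have eqF: "?F = e1 \<times> e2 - (e1 - e3) \<times> (e2 - e3)" by auto
  have ne1: "e1 - e3 \<noteq> {}"
  proof
    assume "e1 - e3 = {}" then have "e1 \<subseteq> e3" by auto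
    then have "e1 = e3" using card_subset_eq[OF f1(3)] c1 c3 by auto
    then show False using n1 by simp
  qed
  have ne2: "e2 - e3 \<noteq> {}"
  proof
    assume "e2 - e3 = {}" then have "e2 \<subseteq> e3" by auto
    then have "e2 = e3" using card_subset_eq[OF f1(3)] c2 c3 by auto
    then show False using n2 by simp
  qed
  have p1: "card ((e1 - e3) \<times> (e2 - e3)) \<ge> 1"
    using ne1 ne2 f1 by (simp add: card_cartesian_product Suc_le_eq card_gt_0_iff)
  have p4: "card (e1 \<times> e2) = 4" using c1 c2 by (simp add: card_cartesian_product)
  have "(e1 - e3) \<times> (e2 - e3) \<subseteq> e1 \<times> e2" by auto
  then have "card ?F = card (e1 \<times> e2) - card ((e1 - e3) \<times> (e2 - e3))" unfolding eqF
    using f1 by (subst card_Diff_subset) (auto intro: finite_subset)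
  then have "card ?F \<le> 3" using p1 p4 by linarith
  moreover have "finite ?F" using f1 by auto
  ultimately show ?thesis using sub
    by (meson card_image_le card_mono finite_imageI finite_subset le_trans)
qed

lemma two_elem:
  assumes "card e = 2" "v \<in> e"
  shows "\<exists>c. c \<noteq> v \<and> e = {v,c}"
  using assms by (auto simp: card_2_iff insert_commute)

lemma cov_tri:
  assumes c1: "card e1 = 2" and c2: "card e2 = 2" and c3: "card e3 = 2"
    and i12: "e1 \<inter> e2 \<noteq> {}" and i13: "e1 \<inter> e3 \<noteq> {}" and i23: "e2 \<inter> e3 \<noteq> {}"
    and nc: "e1 \<inter> e2 \<inter> e3 = {}"
  shows "cov {e1,e2,e3} \<subseteq> {e1,e2,e3}"
proof -
  obtain u where u: "u \<in> e1" "u \<in> e2" using i12 by auto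
  obtain v where v: "v \<in> e1" "v \<in> e3" using i13 by auto
  obtain w where w: "w \<in> e2" "w \<in> e3" using i23 by auto
  have uv: "u \<noteq> v" "u \<noteq> w" "v \<noteq> w" using u v w nc by auto
  obtain a where a: "e1 = {u,a}" using two_elem[OF c1 u(1)] by auto
  have e1: "e1 = {u,v}" using a v uv by auto
  obtain b where b: "e2 = {u,b}" using two_elem[OF c2 u(2)] by auto
  have e2: "e2 = {u,w}" using b w uv by auto
  obtain c where c: "e3 = {v,c}" using two_elem[OF c3 v(2)] by auto
  have e3: "e3 = {v,w}" using c w uv by auto
  show ?thesis unfolding cov_def e1 e2 e3 using uv by (auto simp: insert_commute)
qed

lemma cov_bound:
  assumes c1: "card e1 = 2" and c2: "card e2 = 2" and c3: "card e3 = 2"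
    and n: "e1 \<noteq> e2" "e1 \<noteq> e3" "e2 \<noteq> e3"
    and nc: "e1 \<inter> e2 \<inter> e3 = {}"
  shows "finite (cov {e1,e2,e3}) \<and> card (cov {e1,e2,e3}) \<le> 3"
proof -
  consider "e1 \<inter> e2 = {}" | "e1 \<inter> e3 = {}" | "e2 \<inter> e3 = {}"
    | "e1 \<inter> e2 \<noteq> {}" "e1 \<inter> e3 \<noteq> {}" "e2 \<inter> e3 \<noteq> {}" by blast
  then show ?thesis
  proof cases
    case 1 then show ?thesis using cov_disj[OF c1 c2 c3] n by auto
  next
    case 2 then show ?thesis using cov_disj[OF c1 c3 c2] n by (auto simp: insert_commute)
  next
    case 3
    have "{e1,e2,e3} = {e2,e3,e1}" by auto
    then show ?thesis using 3 cov_disj[OF c2 c3 c1] n by auto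
  next
    case 4
    have "cov {e1,e2,e3} \<subseteq> {e1,e2,e3}" using cov_tri[OF c1 c2 c3 4 nc] .
    moreover have "card {e1,e2,e3} \<le> 3" by (simp add: card_insert_le_m1)
    ultimately show ?thesis by (meson card_mono finite.emptyI finite.insertI le_trans finite_subset)
  qed
qed

lemma centre_unique:
  assumes "star_class_centre C k v" "star_class_centre C k w"
  shows "v = w"
proof (rule ccontr)
  assume vw: "v \<noteq> w"
  obtain a b c where abc: "a \<noteq> b" "a \<noteq> c" "b \<noteq> c" "a \<noteq> v" "b \<noteq> v" "c \<noteq> v"
     "C k = {{v, a}, {v, b}, {v, c}}" using assms(1) unfolding star_class_centre_def by blast
  obtain a' b' c' where abc': "C k = {{w, a'}, {w, b'}, {w, c'}}"
    using assms(2) unfolding star_class_centre_def by blast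
  have "\<forall>e\<in>C k. w \<in> e" using abc' by auto
  then have "w \<in> {v,a}" "w \<in> {v,b}" "w \<in> {v,c}" using abc(7) by auto
  then show False using vw abc by auto
qed

lemma nonstar_cov:
  assumes c: "card (C k) = 3" and c2: "\<forall>e\<in>C k. card e = 2"
    and ns: "\<not> (\<exists>v. star_class_centre C k v)"
  shows "finite (cov (C k)) \<and> card (cov (C k)) \<le> 3"
proof -
  obtain e1 e2 e3 where E: "C k = {e1,e2,e3}" "e1 \<noteq> e2" "e2 \<noteq> e3" "e1 \<noteq> e3"
    using c unfolding card_3_iff by blast
  have cc: "card e1 = 2" "card e2 = 2" "card e3 = 2" using c2 E by auto
  have nc: "e1 \<inter> e2 \<inter> e3 = {}"
  proof (rule ccontr)
    assume "e1 \<inter> e2 \<inter> e3 \<noteq> {}"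
    then obtain v where v: "v \<in> e1" "v \<in> e2" "v \<in> e3" by auto
    obtain a where a: "a \<noteq> v" "e1 = {v,a}" using two_elem[OF cc(1) v(1)] by auto
    obtain b where b: "b \<noteq> v" "e2 = {v,b}" using two_elem[OF cc(2) v(2)] by auto
    obtain d where d: "d \<noteq> v" "e3 = {v,d}" using two_elem[OF cc(3) v(3)] by auto
    have "a \<noteq> b" "a \<noteq> d" "b \<noteq> d" using a b d E by auto
    then have "star_class_centre C k v" unfolding star_class_centre_def using a b d E by blast
    then show False using ns by blast
  qed
  show ?thesis unfolding E using cov_bound[OF cc] E nc by auto
qed

theorem claim3p6:
  fixes V :: "'a set" and K :: "'c set" and C :: "'c \<Rightarrow> 'a set set"
  assumes "coloured_graph V K C"
    and "card K = card V"
    and "\<forall>k\<in>K. card (C k) = 3"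
    and "card (non_star_vertices V K C) \<ge> 8"
  shows "\<exists>x\<in>non_star_vertices V K C. \<exists>y\<in>non_star_vertices V K C.
           x \<noteq> y \<and> (\<forall>k\<in>K. \<not> dominates C k x y)"
proof (rule ccontr)
  assume H0: "\<not> ?thesis"
  define N where "N = non_star_vertices V K C"
  have H: "\<And>x y. x \<in> N \<Longrightarrow> y \<in> N \<Longrightarrow> x \<noteq> y \<Longrightarrow> \<exists>k\<in>K. dominates C k x y"
    using H0 unfolding N_def by blast
  have finV: "finite V" and finK: "finite K" and edges: "\<forall>k\<in>K. \<forall>e\<in>C k. edge_of V e"
    using assms(1) unfolding coloured_graph_def by auto
  have NV: "N \<subseteq> V" unfolding N_def non_star_vertices_def by auto
  have finN: "finite N" using NV finV finite_subset by blast
  have Nns: "\<And>v. v \<in> N \<Longrightarrow> \<not> star_vertex K C v" unfolding N_def non_star_vertices_def by auto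
  have card2: "\<forall>k\<in>K. \<forall>e\<in>C k. card e = 2"
    using edges unfolding edge_of_def card_2_iff by blast
  define K' where "K' = {k\<in>K. \<not> (\<exists>v. star_class_centre C k v)}"
  define S where "S = {k\<in>K. \<exists>v. star_class_centre C k v}"
  have KS: "K = K' \<union> S" "K' \<inter> S = {}" unfolding K'_def S_def by auto
  have finK': "finite K'" "finite S" using finK unfolding K'_def S_def by auto
  \<comment> \<open>star vertices inject into star classes\<close>
  define g where "g v = (SOME k. k \<in> K \<and> star_class_centre C k v)" for v
  have g: "g v \<in> K \<and> star_class_centre C (g v) v" if "v \<in> V - N" for v
  proof -
    have "star_vertex K C v" using that unfolding N_def non_star_vertices_def by auto
    then have "\<exists>k. k \<in> K \<and> star_class_centre C k v" unfolding star_vertex_def by auto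
    then show ?thesis unfolding g_def by (rule someI_ex)
  qed
  have "inj_on g (V - N)"
    by (rule inj_onI) (metis g centre_unique)
  moreover have "g ` (V - N) \<subseteq> S" using g unfolding S_def by auto
  ultimately have "card (V - N) \<le> card S" using finK' card_inj_on_le by blast
  moreover have "card V = card N + card (V - N)"
    using NV finV by (metis card_Diff_subset card_mono finite_subset le_add_diff_inverse)
  moreover have "card K = card K' + card S" using KS finK' card_Un_disjoint by metis
  ultimately have cK': "card K' \<le> card N" using assms(2) by linarith
  define P where "P = {A. A \<subseteq> N \<and> card A = 2}"
  define D where "D k = cov (C k) \<inter> Pow N" for k
  have PD: "P \<subseteq> (\<Union>k\<in>K'. D k)"
  proof
    fix A assume "A \<in> P"
    then obtain x y where xy: "A = {x,y}" "x \<noteq> y" "x \<in> N" "y \<in> N"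
      unfolding P_def by (auto simp: card_2_iff)
    then obtain k where k: "k \<in> K" "dominates C k x y" using H by blast
    have "k \<in> K'"
    proof (rule ccontr)
      assume "k \<notin> K'"
      then obtain v where v: "star_class_centre C k v" unfolding K'_def using k by auto
      then have "star_vertex K C v" using k unfolding star_vertex_def by auto
      then have "x \<noteq> v" "y \<noteq> v" using Nns xy by auto
      obtain a b c where abc: "a \<noteq> b" "a \<noteq> c" "b \<noteq> c" "C k = {{v, a}, {v, b}, {v, c}}"
        using v unfolding star_class_centre_def by blast
      have "x \<in> {v,a} \<or> y \<in> {v,a}" "x \<in> {v,b} \<or> y \<in> {v,b}" "x \<in> {v,c} \<or> y \<in> {v,c}"
        using k(2) abc unfolding dominates_def by auto
      then show False using abc \<open>x \<noteq> v\<close> \<open>y \<noteq> v\<close> by auto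
    qed
    moreover have "A \<in> D k" unfolding D_def cov_def using xy k(2)
      unfolding dominates_def by auto
    ultimately show "A \<in> (\<Union>k\<in>K'. D k)" by auto
  qed
  have Dk: "card (D k) \<le> 3" if "k \<in> K'" for k
  proof -
    have "finite (cov (C k)) \<and> card (cov (C k)) \<le> 3"
      using nonstar_cov[of C k] that assms(3) card2 unfolding K'_def by auto
    then show ?thesis unfolding D_def by (meson Int_lower1 card_mono le_trans)
  qed
  have "card P \<le> card (\<Union>k\<in>K'. D k)"
    by (rule card_mono) (use PD finN D_def in auto)
  also have "\<dots> \<le> (\<Sum>k\<in>K'. card (D k))" by (rule card_UN_le[OF finK'(1)])
  also have "\<dots> \<le> (\<Sum>k\<in>K'. 3)" by (rule sum_mono) (use Dk in auto)
  also have "\<dots> = 3 * card K'" by simp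
  finally have le: "card P \<le> 3 * card N" using cK' by linarith
  have "card P = card N * (card N - 1) div 2"
    unfolding P_def using n_subsets[OF finN, of 2] choose_two by simp
  moreover have "card N \<ge> 8" using assms(4) unfolding N_def .
  ultimately show False using le
  proof -
    assume a: "card P = card N * (card N - 1) div 2" "card N \<ge> 8" "card P \<le> 3 * card N"
    obtain m where m: "card N = m + 8" using a(2) by (metis add.commute le_Suc_ex)
    show False using a unfolding m by (simp add: algebra_simps)
  qed
qed

end
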